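(* Let $X,Y,Z\in\mathbb{Z}[i]$ satisfy $X^2+iY^2=Z^2$, $\gcd(X,Y)\in U$, $XYZ\neq0$, with $X,Z\in O^I$ and $Y=(1+i)^2W$, $W\in G$. Then there exist an integer $t$, $0\le t\le3$, and $P,Q\in G$ with $\gcd(P,Q)=1$ such that $$X=i^{t+1}\big(P^2-(-1)^t iQ^2\big),\quad Y=(1+i)^2PQ,\quad Z=i^{t+1}\big(P^2+(-1)^t iQ^2\big).$$
   Context: $\mathbb{Z}[i]$ is the ring of Gaussian integers, $U=\{1,-1,i,-i\}$ its unit group; $R(\alpha),I(\alpha)$ are real and imaginary parts. $\gcd(x,y)\in U$ means no common non-unit divisor; for $P,Q\in G$, $\gcd(P,Q)=1$ means no common prime factor. $O=\{\alpha: R(\alpha)+I(\alpha)\equiv1\pmod 2\}$, $O^I=\{\alpha\in O: R(\alpha)\equiv 1\pmod 4\}$. $G$ is the set of Gaussian integers $(1+i)^{a_1}p_2^{a_2}\cdots p_m^{a_m}$ with integers $a_j\ge0$ and $p_j$ distinct Gaussian primes in $O^I$. *)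

theory Defs
  imports Complex_Main
begin

definition gauss_ints :: "complex set" where
  "gauss_ints = {z. \<exists>a b :: int. z = Complex (of_int a) (of_int b)}"

definition gdvd :: "complex \<Rightarrow> complex \<Rightarrow> bool" where
  "gdvd a b \<longleftrightarrow> (\<exists>c\<in>gauss_ints. b = a * c)"

definition gunits :: "complex set" where
  "gunits = {1, -1, \<i>, -\<i>}"

definition gprime :: "complex \<Rightarrow> bool" where
  "gprime p \<longleftrightarrow> p \<in> gauss_ints \<and> p \<noteq> 0 \<and> p \<notin> gunits \<and>
     (\<forall>a\<in>gauss_ints. \<forall>b\<in>gauss_ints. gdvd p (a * b) \<longrightarrow> gdvd p a \<or> gdvd p b)"

definition gO :: "complex set" where
  "gO = {z. \<exists>a b :: int. z = Complex (of_int a) (of_int b) \<and> odd (a + b)}"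

definition gOI :: "complex set" where
  "gOI = {z. \<exists>a b :: int. z = Complex (of_int a) (of_int b) \<and> odd (a + b) \<and> a mod 4 = 1}"

definition gG :: "complex set" where
  "gG = {z. \<exists>(a::nat) (F::complex set) (e::complex \<Rightarrow> nat).
            finite F \<and> (\<forall>p\<in>F. gprime p \<and> p \<in> gOI) \<and>
            z = (1 + \<i>) ^ a * (\<Prod>p\<in>F. p ^ e p)}"

definition gcd_unit :: "complex \<Rightarrow> complex \<Rightarrow> bool" where
  "gcd_unit x y \<longleftrightarrow> (\<forall>d\<in>gauss_ints. gdvd d x \<and> gdvd d y \<longrightarrow> d \<in> gunits)"

text \<open>gcd(P,Q) = 1 for P, Q in G: no common prime factor.\<close>
definition no_common_prime :: "complex \<Rightarrow> complex \<Rightarrow> bool" where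
  "no_common_prime x y \<longleftrightarrow> \<not> (\<exists>p. gprime p \<and> gdvd p x \<and> gdvd p y)"

end

theory Submission imports Defs begin

lemma gi_iff: "z \<in> gauss_ints \<longleftrightarrow> Re z \<in> \<int> \<and> Im z \<in> \<int>"
proof
  assume "z \<in> gauss_ints" then show "Re z \<in> \<int> \<and> Im z \<in> \<int>"
    unfolding gauss_ints_def by auto
next
  assume "Re z \<in> \<int> \<and> Im z \<in> \<int>"
  then obtain a b where "Re z = of_int a" "Im z = of_int b" by (auto elim!: Ints_cases)
  then have "z = Complex (of_int a) (of_int b)" by (simp add: complex_eq_iff)
  then show "z \<in> gauss_ints" unfolding gauss_ints_def by blast
qed

lemma gi_add[intro]: "a \<in> gauss_ints \<Longrightarrow> b \<in> gauss_ints \<Longrightarrow> a + b \<in> gauss_ints"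
  by (simp add: gi_iff)
lemma gi_diff[intro]: "a \<in> gauss_ints \<Longrightarrow> b \<in> gauss_ints \<Longrightarrow> a - b \<in> gauss_ints"
  by (simp add: gi_iff)
lemma gi_uminus[intro]: "a \<in> gauss_ints \<Longrightarrow> - a \<in> gauss_ints"
  by (simp add: gi_iff)
lemma gi_mult[intro]: "a \<in> gauss_ints \<Longrightarrow> b \<in> gauss_ints \<Longrightarrow> a * b \<in> gauss_ints"
  by (simp add: gi_iff)
lemma gi_power[intro]: "a \<in> gauss_ints \<Longrightarrow> a ^ n \<in> gauss_ints"
  by (induction n) (auto simp: gi_iff)
lemma gi_one[simp,intro]: "1 \<in> gauss_ints" and gi_zero[simp,intro]: "0 \<in> gauss_ints"
  and gi_i[simp,intro]: "\<i> \<in> gauss_ints"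
  by (auto simp: gi_iff)
lemma gi_numeral[simp,intro]: "numeral n \<in> gauss_ints"
  by (simp add: gi_iff)
lemma gunits_gi: "u \<in> gunits \<Longrightarrow> u \<in> gauss_ints"
  by (auto simp: gunits_def gi_iff)

lemma gdvd_refl[simp]: "a \<in> gauss_ints \<Longrightarrow> gdvd a a" unfolding gdvd_def by force
lemma gdvd_trans: "gdvd a b \<Longrightarrow> gdvd b c \<Longrightarrow> gdvd a c"
  unfolding gdvd_def by (metis gi_mult mult.assoc)
lemma gdvd_multI: "gdvd a b \<Longrightarrow> c \<in> gauss_ints \<Longrightarrow> gdvd a (b * c)"
  unfolding gdvd_def by (metis gi_mult mult.assoc)
lemma gdvd_multI2: "gdvd a b \<Longrightarrow> c \<in> gauss_ints \<Longrightarrow> gdvd a (c * b)"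
  using gdvd_multI by (metis mult.commute)
lemma gdvd_add: "gdvd a b \<Longrightarrow> gdvd a c \<Longrightarrow> gdvd a (b + c)"
  unfolding gdvd_def by (metis gi_add distrib_left)
lemma gdvd_diff: "gdvd a b \<Longrightarrow> gdvd a c \<Longrightarrow> gdvd a (b - c)"
  unfolding gdvd_def by (metis gi_diff right_diff_distrib)
lemma gdvd_gi: "gdvd a b \<Longrightarrow> a \<in> gauss_ints \<Longrightarrow> b \<in> gauss_ints"
  unfolding gdvd_def by auto

lemma norm_int:
  fixes a1 a2 b1 b2 :: int
  shows "(a1*b1 - a2*b2)^2 + (a1*b2+a2*b1)^2 = (a1^2+a2^2)*(b1^2+b2^2)"
  by (simp add: algebra_simps power2_eq_square)

lemma sq_sum_one:
  fixes a1 a2 :: int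
  assumes "a1^2 + a2^2 = 1"
  shows "(a1 = 1 \<and> a2 = 0) \<or> (a1 = -1 \<and> a2 = 0) \<or> (a1 = 0 \<and> a2 = 1) \<or> (a1 = 0 \<and> a2 = -1)"
proof -
  have "a1^2 \<le> 1" "a2^2 \<le> 1" using assms by (smt (verit) zero_le_power2)+
  then have "\<bar>a1\<bar> \<le> 1" "\<bar>a2\<bar> \<le> 1"
    by (metis abs_le_square_iff abs_one one_power2)+
  then have "a1 \<in> {-1,0,1}" "a2 \<in> {-1,0,1}" by auto
  then show ?thesis using assms by auto
qed

lemma unit_factor:
  assumes a: "a \<in> gauss_ints" and b: "b \<in> gauss_ints" and u: "a * b \<in> gunits"
  shows "a \<in> gunits"
proof -
  obtain a1 a2 where A: "a = Complex (of_int a1) (of_int a2)" using a unfolding gauss_ints_def by blast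
  obtain b1 b2 where B: "b = Complex (of_int b1) (of_int b2)" using b unfolding gauss_ints_def by blast
  have "(a1*b1 - a2*b2)^2 + (a1*b2+a2*b1)^2 = 1"
  proof -
    have "Re (a*b) = of_int (a1*b1 - a2*b2)" "Im (a*b) = of_int (a1*b2+a2*b1)" using A B by auto
    moreover have "\<forall>z\<in>gunits. Re z^2 + Im z^2 = 1" by (auto simp: gunits_def)
    then have "Re (a*b)^2 + Im (a*b)^2 = 1" using u by blast
    ultimately have "real_of_int ((a1*b1 - a2*b2)^2 + (a1*b2+a2*b1)^2) = 1" by simp
    then show ?thesis by linarith
  qed
  then have "(a1^2+a2^2)*(b1^2+b2^2) = 1" by (simp add: norm_int)
  moreover have "a1^2+a2^2 \<ge> 0" by simp
  ultimately have "a1^2+a2^2 = 1" using pos_zmult_eq_1_iff_lemma by fastforce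
  then show ?thesis using sq_sum_one[of a1 a2] A
    by (auto simp: gunits_def complex_eq_iff)
qed

lemma dvd_1i_iff: "gdvd (1 + \<i>) (Complex (of_int a) (of_int b)) \<longleftrightarrow> even (a + b)"
proof
  assume "gdvd (1 + \<i>) (Complex (of_int a) (of_int b))"
  then obtain c where c: "c \<in> gauss_ints" "Complex (of_int a) (of_int b) = (1 + \<i>) * c"
    unfolding gdvd_def by blast
  then obtain c1 c2 where C: "c = Complex (of_int c1) (of_int c2)" unfolding gauss_ints_def by blast
  have "real_of_int a = of_int c1 - of_int c2" "real_of_int b = of_int c1 + of_int c2"
    using c(2) C by (simp_all add: complex_eq_iff)
  then have "a = c1 - c2" "b = c1 + c2" by linarith+
  then show "even (a + b)" by simp
next
  assume e: "even (a + b)"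
  then have e2: "even (b - a)" by presburger
  define c where "c = Complex (of_int ((a+b) div 2)) (of_int ((b - a) div 2))"
  have "c \<in> gauss_ints" unfolding c_def gauss_ints_def by blast
  moreover have "Complex (of_int a) (of_int b) = (1 + \<i>) * c"
  proof -
    have "2 * ((a+b) div 2) = a + b" "2 * ((b-a) div 2) = b - a" using e e2 by simp_all
    then have h: "real_of_int (2 * ((a+b) div 2)) = of_int a + of_int b"
       "real_of_int (2 * ((b-a) div 2)) = of_int b - of_int a" by simp_all
    show ?thesis unfolding c_def using h by (simp add: complex_eq_iff) 
  qed
  ultimately show "gdvd (1 + \<i>) (Complex (of_int a) (of_int b))" unfolding gdvd_def by blast
qed

lemma gprime_1i: "gprime (1 + \<i>)"
  unfolding gprime_def
proof (intro conjI ballI impI)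
  show "1 + \<i> \<in> gauss_ints" by auto
  show "1 + \<i> \<noteq> 0" by (simp add: complex_eq_iff)
  show "1 + \<i> \<notin> gunits" by (simp add: gunits_def complex_eq_iff)
  fix a b assume a: "a \<in> gauss_ints" and b: "b \<in> gauss_ints" and d: "gdvd (1 + \<i>) (a * b)"
  obtain a1 a2 where A: "a = Complex (of_int a1) (of_int a2)" using a unfolding gauss_ints_def by blast
  obtain b1 b2 where B: "b = Complex (of_int b1) (of_int b2)" using b unfolding gauss_ints_def by blast
  have "a * b = Complex (of_int (a1*b1 - a2*b2)) (of_int (a1*b2+a2*b1))"
    using A B by (simp add: complex_eq_iff)
  then have "even ((a1*b1 - a2*b2) + (a1*b2+a2*b1))" using d dvd_1i_iff by metis
  moreover have "(a1+a2)*(b1+b2) = ((a1*b1 - a2*b2) + (a1*b2+a2*b1)) + 2*(a2*b2)" by (simp add: algebra_simps)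
  ultimately have "even ((a1+a2)*(b1+b2))" by (metis dvd_add dvd_triv_left)
  then have "even (a1+a2) \<or> even (b1+b2)" by simp
  then show "gdvd (1 + \<i>) a \<or> gdvd (1 + \<i>) b" using A B dvd_1i_iff by metis
qed

lemma gunits_inv: "u \<in> gunits \<Longrightarrow> inverse u \<in> gunits \<and> u * inverse u = 1"
  by (auto simp: gunits_def complex_eq_iff)

lemma gunits_nz: "u \<in> gunits \<Longrightarrow> u \<noteq> 0"
  by (auto simp: gunits_def complex_eq_iff)

lemma gi_prod: "finite F \<Longrightarrow> (\<forall>p\<in>F. f p \<in> gauss_ints) \<Longrightarrow> prod f F \<in> gauss_ints"
  by (induction F rule: finite_induct) auto

lemma gprime_gi: "gprime p \<Longrightarrow> p \<in> gauss_ints" by (simp add: gprime_def)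

lemma gG_gi: "c \<in> gG \<Longrightarrow> c \<in> gauss_ints"
  unfolding gG_def
  by (auto intro!: gi_mult gi_power gi_prod simp: gprime_def)

lemma gG_one: "1 \<in> gG"
  unfolding gG_def by (rule CollectI, rule exI[of _ 0], rule exI[of _ "{}"]) simp

lemma gG_mult_1i: "c \<in> gG \<Longrightarrow> (1 + \<i>) * c \<in> gG"
proof -
  assume "c \<in> gG"
  then obtain a F e where H: "finite F" "\<forall>p\<in>F. gprime p \<and> p \<in> gOI" "c = (1 + \<i>) ^ a * (\<Prod>p\<in>F. p ^ e p)"
    unfolding gG_def by blast
  then have "(1 + \<i>) * c = (1 + \<i>) ^ Suc a * (\<Prod>p\<in>F. p ^ e p)" by simp
  then show ?thesis using H(1,2) unfolding gG_def by blast
qed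

lemma gG_mult_prime: assumes "c \<in> gG" "gprime q" "q \<in> gOI" shows "q * c \<in> gG"
proof -
  obtain a F e where H: "finite F" "\<forall>p\<in>F. gprime p \<and> p \<in> gOI" "c = (1 + \<i>) ^ a * (\<Prod>p\<in>F. p ^ e p)"
    using assms(1) unfolding gG_def by blast
  define e' where "e' = e(q := (if q \<in> F then e q else 0) + 1)"
  have fin: "finite (insert q F)" using H(1) by simp
  have pr: "\<forall>p\<in>insert q F. gprime p \<and> p \<in> gOI" using H(2) assms by auto
  have "(\<Prod>p\<in>insert q F. p ^ e' p) = q ^ e' q * (\<Prod>p\<in>insert q F - {q}. p ^ e' p)"
    by (rule prod.remove[OF fin]) simp
  also have "(\<Prod>p\<in>insert q F - {q}. p ^ e' p) = (\<Prod>p\<in>F - {q}. p ^ e p)"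
    by (rule prod.cong) (auto simp: e'_def)
  also have "q ^ e' q * (\<Prod>p\<in>F - {q}. p ^ e p) = q * (\<Prod>p\<in>F. p ^ e p)"
  proof (cases "q \<in> F")
    case True
    then have "(\<Prod>p\<in>F. p ^ e p) = q ^ e q * (\<Prod>p\<in>F - {q}. p ^ e p)"
      using H(1) by (simp add: prod.remove)
    then show ?thesis using True by (simp add: e'_def)
  next
    case False
    then show ?thesis by (simp add: e'_def)
  qed
  finally have "q * c = (1 + \<i>) ^ a * (\<Prod>p\<in>insert q F. p ^ e' p)"
    using H(3) by (simp add: ac_simps)
  then show ?thesis using fin pr unfolding gG_def by blast
qed

lemma gG_induct[consumes 1, case_names one step]:
  assumes c: "c \<in> gG" and one: "P 1"
    and step: "\<And>c p. c \<in> gG \<Longrightarrow> P c \<Longrightarrow> gprime p \<Longrightarrow> (\<forall>g\<in>gG. p * g \<in> gG) \<Longrightarrow> P (p * c)"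
  shows "P c"
proof -
  obtain a F e where H: "finite F" "\<forall>p\<in>F. gprime p \<and> p \<in> gOI" "c = (1 + \<i>) ^ a * (\<Prod>p\<in>F. p ^ e p)"
    using c unfolding gG_def by blast
  have F: "P (\<Prod>p\<in>F. p ^ e p) \<and> (\<Prod>p\<in>F. p ^ e p) \<in> gG"
    using H(1,2)
  proof (induction F rule: finite_induct)
    case empty then show ?case using one gG_one by simp
  next
    case (insert x F)
    let ?R = "\<Prod>p\<in>F. p ^ e p"
    have R: "P ?R \<and> ?R \<in> gG" using insert by auto
    have x: "gprime x" "x \<in> gOI" using insert by auto
    have "P (x ^ n * ?R) \<and> x ^ n * ?R \<in> gG" for n
    proof (induction n)
      case 0 then show ?case using R by simp
    next
      case (Suc n)
      have "P (x * (x ^ n * ?R))"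
        using step[of "x ^ n * ?R" x] Suc x gG_mult_prime by blast
      moreover have "x * (x ^ n * ?R) \<in> gG" using Suc x gG_mult_prime by blast
      ultimately show ?case by (simp add: ac_simps)
    qed
    then show ?case using insert by simp
  qed
  have "P ((1 + \<i>) ^ n * (\<Prod>p\<in>F. p ^ e p)) \<and> (1 + \<i>) ^ n * (\<Prod>p\<in>F. p ^ e p) \<in> gG" for n
  proof (induction n)
    case 0 then show ?case using F by simp
  next
    case (Suc n)
    have "P ((1 + \<i>) * ((1 + \<i>) ^ n * (\<Prod>p\<in>F. p ^ e p)))"
      using step[of "(1 + \<i>) ^ n * (\<Prod>p\<in>F. p ^ e p)" "1 + \<i>"] gprime_1i gG_mult_1i Suc by blast
    moreover have "(1 + \<i>) * ((1 + \<i>) ^ n * (\<Prod>p\<in>F. p ^ e p)) \<in> gG"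
      using gG_mult_1i Suc by blast
    ultimately show ?case by (simp only: power_Suc mult.assoc)
  qed
  then show ?thesis using H(3) by simp
qed

lemma sq_split:
  assumes "c \<in> gG"
  shows "\<forall>a b u. a \<in> gauss_ints \<longrightarrow> b \<in> gauss_ints \<longrightarrow> u \<in> gunits \<longrightarrow> a * b = u * c^2 \<longrightarrow>
     \<not>(\<exists>p. gprime p \<and> gdvd p a \<and> gdvd p b) \<longrightarrow>
     (\<exists>d e v w. d \<in> gG \<and> e \<in> gG \<and> v \<in> gunits \<and> w \<in> gunits \<and> a = v * d^2 \<and> b = w * e^2 \<and> d * e = c)"
  using assms
proof (induction rule: gG_induct)
  case one
  show ?case
  proof (intro allI impI)
    fix a b u assume a: "a \<in> gauss_ints" and b: "b \<in> gauss_ints" and u: "u \<in> gunits" and ab: "a * b = u * 1^2"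
    then have "a * b \<in> gunits" by simp
    then have "a \<in> gunits" "b \<in> gunits" using unit_factor a b by (metis mult.commute)+
    then show "\<exists>d e v w. d \<in> gG \<and> e \<in> gG \<and> v \<in> gunits \<and> w \<in> gunits \<and> a = v * d^2 \<and> b = w * e^2 \<and> d * e = 1"
      using gG_one by (intro exI[of _ 1] exI[of _ a] exI[of _ b]) simp
  qed
next
  case (step c p)
  have pp: "gprime p" using step by blast
  have cl: "\<forall>g\<in>gG. p * g \<in> gG" using step by blast
  have cgG: "c \<in> gG" using step by blast
  have cgi: "c \<in> gauss_ints" using cgG gG_gi by blast
  have pgi: "p \<in> gauss_ints" and pnz: "p \<noteq> 0" using pp by (auto simp: gprime_def)
  have H: "\<exists>d e v w. d \<in> gG \<and> e \<in> gG \<and> v \<in> gunits \<and> w \<in> gunits \<and> a = v * d^2 \<and> b = w * e^2 \<and> d * e = p * c"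
    if a: "a \<in> gauss_ints" and b: "b \<in> gauss_ints" and u: "u \<in> gunits" and ab: "a * b = u * (p * c)^2"
      and cop: "\<not>(\<exists>q. gprime q \<and> gdvd q a \<and> gdvd q b)" and pa: "gdvd p a" for a b u
  proof -
    have ugi: "u \<in> gauss_ints" using u gunits_gi by blast
    obtain a1 where a1: "a1 \<in> gauss_ints" "a = p * a1" using pa unfolding gdvd_def by blast
    have "p * (a1 * b) = p * (p * (u * c^2))" using ab a1 by (simp add: power2_eq_square ac_simps)
    then have e1: "a1 * b = p * (u * c^2)" using pnz by simp
    have "gdvd p (a1 * b)" unfolding gdvd_def using e1 ugi cgi by blast
    then have "gdvd p a1 \<or> gdvd p b" using pp a1 b unfolding gprime_def by blast
    moreover have "\<not> gdvd p b" using cop pa pp by blast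
    ultimately obtain a2 where a2: "a2 \<in> gauss_ints" "a1 = p * a2" unfolding gdvd_def by blast
    have "p * (a2 * b) = p * (u * c^2)" using e1 a2 by (simp add: ac_simps)
    then have e2: "a2 * b = u * c^2" using pnz by simp
    have cop2: "\<not>(\<exists>q. gprime q \<and> gdvd q a2 \<and> gdvd q b)"
    proof
      assume "\<exists>q. gprime q \<and> gdvd q a2 \<and> gdvd q b"
      then obtain q where q: "gprime q" "gdvd q a2" "gdvd q b" by blast
      have "a = a2 * (p * p)" using a1 a2 by (simp add: ac_simps)
      then have "gdvd q a" using q(2) gdvd_multI pgi by (metis gi_mult)
      then show False using cop q by blast
    qed
    obtain d e v w where D: "d \<in> gG" "e \<in> gG" "v \<in> gunits" "w \<in> gunits" "a2 = v * d^2" "b = w * e^2" "d * e = c"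
      using step a2(1) b u e2 cop2 by blast
    have "p * d \<in> gG" using cl D(1) by blast
    moreover have "a = v * (p * d)^2" using a1 a2 D by (simp add: power2_eq_square ac_simps)
    moreover have "(p * d) * e = p * c" using D by (simp add: ac_simps)
    ultimately show ?thesis using D by blast
  qed
  show ?case
  proof (intro allI impI)
    fix a b u assume a: "a \<in> gauss_ints" and b: "b \<in> gauss_ints" and u: "u \<in> gunits"
      and ab: "a * b = u * (p * c)^2" and cop: "\<not>(\<exists>q. gprime q \<and> gdvd q a \<and> gdvd q b)"
    have ugi: "u \<in> gauss_ints" using u gunits_gi by blast
    have "a * b = p * (p * u * c^2)" using ab by (simp add: power2_eq_square ac_simps)
    then have "gdvd p (a * b)" unfolding gdvd_def using ugi cgi pgi by blast
    then have "gdvd p a \<or> gdvd p b" using pp a b unfolding gprime_def by blast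
    then show "\<exists>d e v w. d \<in> gG \<and> e \<in> gG \<and> v \<in> gunits \<and> w \<in> gunits \<and> a = v * d^2 \<and> b = w * e^2 \<and> d * e = p * c"
    proof
      assume "gdvd p a" then show ?thesis using H a b u ab cop by blast
    next
      assume pb: "gdvd p b"
      have "b * a = u * (p * c)^2" using ab by (simp add: ac_simps)
      moreover have "\<not>(\<exists>q. gprime q \<and> gdvd q b \<and> gdvd q a)" using cop by blast
      ultimately obtain d e v w where "d \<in> gG" "e \<in> gG" "v \<in> gunits" "w \<in> gunits" "b = v * d^2" "a = w * e^2" "d * e = p * c"
        using H[of b a u] a b u pb by blast
      then show ?thesis by (intro exI[of _ e] exI[of _ d] exI[of _ w] exI[of _ v]) (simp add: ac_simps)
    qed
  qed
qed

lemma half_gi: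
  assumes "Re z = of_int m" "Im z = of_int n" "even m" "even n"
  shows "z / 2 \<in> gauss_ints"
proof -
  obtain k l where "m = 2 * k" "n = 2 * l" using assms(3,4) by (auto elim!: evenE)
  then have "Re (z/2) = of_int k" "Im (z/2) = of_int l" using assms(1,2) by simp_all
  then show ?thesis by (simp add: gi_iff)
qed

lemma one_i_sq: "(1 + \<i>)^2 = 2 * \<i>"
  by (simp add: power2_eq_square algebra_simps)

theorem theorem4p11:
  fixes X Y Z W :: complex
  assumes "X \<in> gauss_ints" and "Y \<in> gauss_ints" and "Z \<in> gauss_ints"
    and "X\<^sup>2 + \<i> * Y\<^sup>2 = Z\<^sup>2"
    and "gcd_unit X Y"
    and "X * Y * Z \<noteq> 0"
    and "X \<in> gOI" and "Z \<in> gOI"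
    and "W \<in> gG" and "Y = (1 + \<i>)\<^sup>2 * W"
  shows "\<exists>(t::nat) P Q. t \<le> 3 \<and> P \<in> gG \<and> Q \<in> gG \<and> no_common_prime P Q \<and>
           X = \<i> ^ (t + 1) * (P\<^sup>2 - (-1) ^ t * \<i> * Q\<^sup>2) \<and>
           Y = (1 + \<i>)\<^sup>2 * P * Q \<and>
           Z = \<i> ^ (t + 1) * (P\<^sup>2 + (-1) ^ t * \<i> * Q\<^sup>2)"
proof -
  obtain x1 x2 where X: "X = Complex (of_int x1) (of_int x2)" "odd (x1 + x2)" "x1 mod 4 = 1"
    using assms(7) unfolding gOI_def by blast
  obtain z1 z2 where Z: "Z = Complex (of_int z1) (of_int z2)" "odd (z1 + z2)" "z1 mod 4 = 1"
    using assms(8) unfolding gOI_def by blast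
  define \<alpha> where "\<alpha> = (Z + X) / 2"
  define \<beta> where "\<beta> = (Z - X) / 2"
  have ev: "even (z1 + x1)" "even (z2 + x2)" "even (z1 - x1)" "even (z2 - x2)"
    using X Z by presburger+
  have agi: "\<alpha> \<in> gauss_ints" unfolding \<alpha>_def
    by (rule half_gi[of _ "z1 + x1" "z2 + x2"]) (use X Z ev in simp_all)
  have bgi: "\<beta> \<in> gauss_ints" unfolding \<beta>_def
    by (rule half_gi[of _ "z1 - x1" "z2 - x2"]) (use X Z ev in simp_all)
  have Xab: "X = \<alpha> - \<beta>" and Zab: "Z = \<alpha> + \<beta>" unfolding \<alpha>_def \<beta>_def by (simp_all add: field_simps)
  have Wnz: "W \<noteq> 0" using assms(6) assms(10) by auto
  have ab: "\<alpha> * \<beta> = (- \<i>) * W^2"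
  proof -
    have "\<alpha> * \<beta> = (Z^2 - X^2) / 4" unfolding \<alpha>_def \<beta>_def by (simp add: power2_eq_square field_simps)
    also have "Z^2 - X^2 = \<i> * Y^2" using assms(4) by (metis add_diff_cancel_left')
    also have "\<i> * Y^2 = \<i> * ((2 * \<i>) * W)^2" using assms(10) one_i_sq by simp
    finally show ?thesis by (simp add: power2_eq_square field_simps)
  qed
  have cop: "\<not>(\<exists>p. gprime p \<and> gdvd p \<alpha> \<and> gdvd p \<beta>)"
  proof
    assume "\<exists>p. gprime p \<and> gdvd p \<alpha> \<and> gdvd p \<beta>"
    then obtain p where p: "gprime p" "gdvd p \<alpha>" "gdvd p \<beta>" by blast
    have pX: "gdvd p X" using p Xab gdvd_diff by simp
    have pZ: "gdvd p Z" using p Zab gdvd_add by simp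
    have "gdvd p (Z * Z - X * X)" using pX pZ assms(1,3) by (intro gdvd_diff gdvd_multI)
    then have "gdvd p ((Z * Z - X * X) * (- \<i>))" by (rule gdvd_multI) auto
    moreover have "(Z * Z - X * X) * (- \<i>) = Y * Y"
    proof -
      have "Z * Z - X * X = \<i> * (Y * Y)" using assms(4) by (simp add: power2_eq_square algebra_simps)
      then show ?thesis by (simp add: algebra_simps)
    qed
    ultimately have "gdvd p (Y * Y)" by simp
    then have "gdvd p Y" using p(1) assms(2) unfolding gprime_def by blast
    then have "p \<in> gunits" using assms(5) pX p(1) unfolding gcd_unit_def gprime_def by blast
    then show False using p(1) unfolding gprime_def by blast
  qed
  have mi: "- \<i> \<in> gunits" by (simp add: gunits_def)
  obtain P Q v w where D: "P \<in> gG" "Q \<in> gG" "v \<in> gunits" "w \<in> gunits" "\<alpha> = v * P^2" "\<beta> = w * Q^2" "P * Q = W"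
    using sq_split[OF assms(9)] agi bgi mi ab cop by blast
  have "v * w * W^2 = \<alpha> * \<beta>" unfolding D(5,6) D(7)[symmetric] by (simp add: power2_eq_square ac_simps)
  then have "v * w * W^2 = (- \<i>) * W^2" using ab by simp
  then have vw: "v * w = - \<i>" using Wnz by (metis mult_right_cancel zero_less_power2 less_numeral_extra(3) power_eq_0_iff)
  have ncp: "no_common_prime P Q"
    unfolding no_common_prime_def
  proof
    assume "\<exists>p. gprime p \<and> gdvd p P \<and> gdvd p Q"
    then obtain p where p: "gprime p" "gdvd p P" "gdvd p Q" by blast
    have "gdvd p (P * (P * v))" using p D(1,3) gG_gi gunits_gi by (intro gdvd_multI) auto
    moreover have "gdvd p (Q * (Q * w))" using p D(2,4) gG_gi gunits_gi by (intro gdvd_multI) auto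
    ultimately show False using cop p D(5,6) by (simp add: power2_eq_square ac_simps)
  qed
  have Y: "Y = (1 + \<i>)\<^sup>2 * P * Q" using assms(10) D(7) by simp
  have XX: "X = v * P^2 - w * Q^2" and ZZ: "Z = v * P^2 + w * Q^2" using Xab Zab D(5,6) by simp_all
  from D(3) have "v = \<i> \<or> v = -1 \<or> v = -\<i> \<or> v = 1" by (auto simp: gunits_def)
  then show ?thesis
  proof (elim disjE)
    assume v: "v = \<i>"
    then have w: "w = -1" using vw by (simp add: complex_eq_iff)
    show ?thesis
      by (rule exI[of _ 0], rule exI[of _ P], rule exI[of _ Q])
         (use D ncp Y XX ZZ v w in \<open>simp add: algebra_simps\<close>)
  next
    assume v: "v = -1"
    then have w: "w = \<i>" using vw by (simp add: complex_eq_iff)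
    show ?thesis
      by (rule exI[of _ 1], rule exI[of _ P], rule exI[of _ Q])
         (use D ncp Y XX ZZ v w in \<open>simp add: algebra_simps\<close>)
  next
    assume v: "v = -\<i>"
    then have w: "w = 1" using vw by (simp add: complex_eq_iff)
    show ?thesis
      by (rule exI[of _ 2], rule exI[of _ P], rule exI[of _ Q])
         (use D ncp Y XX ZZ v w in \<open>simp add: algebra_simps\<close>)
  next
    assume v: "v = 1"
    then have w: "w = -\<i>" using vw by (simp add: complex_eq_iff)
    show ?thesis
      by (rule exI[of _ 3], rule exI[of _ P], rule exI[of _ Q])
         (use D ncp Y XX ZZ v w in \<open>simp add: algebra_simps\<close>)
  qed
qed

end
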